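(* Let $G$ be a countable directed graph, let $x,y\in\mathcal{V}(G)$ with $x\neq y$, and let $e_1,\dots,e_n$ be distinct edges with source $x$ and range $y$. If $A\in\mathcal{K}_{x,y}$ satisfies $A=P_yAP_x$ and $A\sim\sum_w a_wL_w$ is its Fourier expansion, then $a_{e_i}=0$ for all $i=1,\dots,n$.
   Context: A countable directed graph $G$ has countable vertex set $\mathcal{V}(G)$, edge set $\mathcal{E}(G)$, range and source maps $r,s$. The free semigroupoid $\mathbb{F}^+(G)$ consists of vertices and finite paths $w=e_k\cdots e_1$ with $s(e_i)=r(e_{i-1})$, $s(w)=s(e_1)$, $r(w)=r(e_k)$. On $\ell^2(\mathbb{F}^+(G))$ with orthonormal basis $\{\xi_w\}$, $L_e\xi_w=\xi_{ew}$ if $s(e)=r(w)$ and $0$ otherwise, $P_v$ is the projection onto $\overline{\operatorname{span}}\{\xi_w:r(w)=v\}$, and $L_w=L_{e_k}\cdots L_{e_1}$ for $w=e_k\cdots e_1$, $L_v=P_v$. $\mathcal{T}_+(G)$ is the norm-closed operator algebra generated by all $L_e$ and $P_v$. The Fourier expansion of $A$ is the formal series $\sum_w a_wL_w$ with $a_w=\langle A\xi_{s(w)},\xi_w\rangle$. $\mathfrak{M}_{G,x}$ is the set of characters $\rho$ of $\mathcal{T}_+(G)$ with $\rho(P_x)=1$. A two-dimensional nest representation is a continuous homomorphism $\pi$ of $\mathcal{T}_+(G)$ onto the algebra of operators on a 2-dimensional Hilbert space leaving a fixed one-dimensional subspace $N$ invariant; with unit vectors $h_2\in N$, $h_1\in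 N^\perp$, $\rho^{(i)}_\pi(A)=\langle\pi(A)h_i,h_i\rangle$. $\operatorname{rep}_{x,y}(\mathcal{T}_+(G))$ is the set of such $\pi$ with $\rho^{(1)}_\pi\in\mathfrak{M}_{G,x}$, $\rho^{(2)}_\pi\in\mathfrak{M}_{G,y}$, and $\mathcal{K}_{x,y}=\bigcap\{\ker\pi:\pi\in\operatorname{rep}_{x,y}(\mathcal{T}_+(G))\}$. *)

theory Defs
  imports "HOL-Analysis.Analysis"
begin

text \<open>A directed graph is given by range and source maps r s :: 'e => 'v.
  Elements of the free semigroupoid: vertices Vtx v, and paths Pth [e_k, ..., e_1]
  (nonempty lists, written left to right as e_k ... e_1) with s(e_i) = r(e_(i-1)).\<close>

datatype ('v, 'e) fsg = Vtx 'v | Pth "'e list"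

definition composable :: "('e \<Rightarrow> 'v) \<Rightarrow> ('e \<Rightarrow> 'v) \<Rightarrow> 'e list \<Rightarrow> bool" where
  "composable r s es \<longleftrightarrow> (\<forall>i. Suc i < length es \<longrightarrow> s (es ! i) = r (es ! Suc i))"

definition is_path :: "('e \<Rightarrow> 'v) \<Rightarrow> ('e \<Rightarrow> 'v) \<Rightarrow> ('v, 'e) fsg \<Rightarrow> bool" where
  "is_path r s w \<longleftrightarrow> (case w of Vtx v \<Rightarrow> True | Pth es \<Rightarrow> es \<noteq> [] \<and> composable r s es)"

fun rng :: "('e \<Rightarrow> 'v) \<Rightarrow> ('v, 'e) fsg \<Rightarrow> 'v" where
  "rng r (Vtx v) = v"
| "rng r (Pth es) = r (hd es)"

fun src :: "('e \<Rightarrow> 'v) \<Rightarrow> ('v, 'e) fsg \<Rightarrow> 'v" where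
  "src s (Vtx v) = v"
| "src s (Pth es) = s (last es)"

type_synonym ('v, 'e) vec = "('v, 'e) fsg \<Rightarrow> complex"
type_synonym ('v, 'e) oper = "('v, 'e) vec \<Rightarrow> ('v, 'e) vec"

definition ell2 :: "('e \<Rightarrow> 'v) \<Rightarrow> ('e \<Rightarrow> 'v) \<Rightarrow> ('v, 'e) vec set" where
  "ell2 r s = {f. (\<forall>w. \<not> is_path r s w \<longrightarrow> f w = 0) \<and> (\<lambda>w. (cmod (f w))\<^sup>2) summable_on UNIV}"

definition l2norm :: "('v, 'e) vec \<Rightarrow> real" where
  "l2norm f = sqrt (infsum (\<lambda>w. (cmod (f w))\<^sup>2) UNIV)"

definition l2inner :: "('v, 'e) vec \<Rightarrow> ('v, 'e) vec \<Rightarrow> complex" where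
  "l2inner f g = infsum (\<lambda>w. f w * cnj (g w)) UNIV"

definition xi :: "('v, 'e) fsg \<Rightarrow> ('v, 'e) vec" where
  "xi w = (\<lambda>u. if u = w then 1 else 0)"

text \<open>An operator is represented by its action on l2; it is normalised to be 0 outside l2.\<close>

definition bounded_op :: "('e \<Rightarrow> 'v) \<Rightarrow> ('e \<Rightarrow> 'v) \<Rightarrow> ('v, 'e) oper \<Rightarrow> bool" where
  "bounded_op r s T \<longleftrightarrow>
     (\<forall>f\<in>ell2 r s. T f \<in> ell2 r s)
   \<and> (\<forall>f\<in>ell2 r s. \<forall>g\<in>ell2 r s. \<forall>a b::complex.
        T (\<lambda>w. a * f w + b * g w) = (\<lambda>w. a * T f w + b * T g w))
   \<and> (\<exists>C. \<forall>f\<in>ell2 r s. l2norm (T f) \<le> C * l2norm f)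
   \<and> (\<forall>f. f \<notin> ell2 r s \<longrightarrow> T f = (\<lambda>_. 0))"

definition opnorm :: "('e \<Rightarrow> 'v) \<Rightarrow> ('e \<Rightarrow> 'v) \<Rightarrow> ('v, 'e) oper \<Rightarrow> real" where
  "opnorm r s T = Sup {l2norm (T f) | f. f \<in> ell2 r s \<and> l2norm f \<le> 1}"

definition op_add :: "('v, 'e) oper \<Rightarrow> ('v, 'e) oper \<Rightarrow> ('v, 'e) oper" where
  "op_add A B = (\<lambda>f w. A f w + B f w)"

definition op_diff :: "('v, 'e) oper \<Rightarrow> ('v, 'e) oper \<Rightarrow> ('v, 'e) oper" where
  "op_diff A B = (\<lambda>f w. A f w - B f w)"

definition op_smult :: "complex \<Rightarrow> ('v, 'e) oper \<Rightarrow> ('v, 'e) oper" where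
  "op_smult c A = (\<lambda>f w. c * A f w)"

text \<open>L_e xi_w = xi_(ew) if s(e) = r(w), else 0.\<close>

definition Lop :: "('e \<Rightarrow> 'v) \<Rightarrow> ('e \<Rightarrow> 'v) \<Rightarrow> 'e \<Rightarrow> ('v, 'e) oper" where
  "Lop r s e f = (if f \<in> ell2 r s then
     (\<lambda>w. case w of Vtx _ \<Rightarrow> 0
        | Pth es \<Rightarrow> (case es of [] \<Rightarrow> 0
            | e' # u \<Rightarrow> if e' \<noteq> e then 0
                       else if u = [] then f (Vtx (s e))
                       else if s e = r (hd u) then f (Pth u) else 0))
     else (\<lambda>_. 0))"

definition Pop :: "('e \<Rightarrow> 'v) \<Rightarrow> ('e \<Rightarrow> 'v) \<Rightarrow> 'v \<Rightarrow> ('v, 'e) oper" where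
  "Pop r s v f = (if f \<in> ell2 r s then (\<lambda>w. if is_path r s w \<and> rng r w = v then f w else 0)
                  else (\<lambda>_. 0))"

inductive_set alg_gen :: "('e \<Rightarrow> 'v) \<Rightarrow> ('e \<Rightarrow> 'v) \<Rightarrow> ('v, 'e) oper set" for r s where
  gen_L: "Lop r s e \<in> alg_gen r s"
| gen_P: "Pop r s v \<in> alg_gen r s"
| gen_add: "A \<in> alg_gen r s \<Longrightarrow> B \<in> alg_gen r s \<Longrightarrow> op_add A B \<in> alg_gen r s"
| gen_smult: "A \<in> alg_gen r s \<Longrightarrow> op_smult c A \<in> alg_gen r s"
| gen_mult: "A \<in> alg_gen r s \<Longrightarrow> B \<in> alg_gen r s \<Longrightarrow> A \<circ> B \<in> alg_gen r s"

definition Tplus :: "('e \<Rightarrow> 'v) \<Rightarrow> ('e \<Rightarrow> 'v) \<Rightarrow> ('v, 'e) oper set" where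
  "Tplus r s = {T. bounded_op r s T \<and>
     (\<forall>\<epsilon>>0. \<exists>S\<in>alg_gen r s. opnorm r s (op_diff T S) < \<epsilon>)}"

definition fcoef :: "('e \<Rightarrow> 'v) \<Rightarrow> ('e \<Rightarrow> 'v) \<Rightarrow> ('v, 'e) oper \<Rightarrow> ('v, 'e) fsg \<Rightarrow> complex" where
  "fcoef r s A w = l2inner (A (xi (Vtx (src s w)))) (xi w)"

definition character :: "('e \<Rightarrow> 'v) \<Rightarrow> ('e \<Rightarrow> 'v) \<Rightarrow> (('v, 'e) oper \<Rightarrow> complex) \<Rightarrow> bool" where
  "character r s \<rho> \<longleftrightarrow>
     (\<forall>A\<in>Tplus r s. \<forall>B\<in>Tplus r s. \<rho> (op_add A B) = \<rho> A + \<rho> B \<and> \<rho> (A \<circ> B) = \<rho> A * \<rho> B)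
   \<and> (\<forall>A\<in>Tplus r s. \<forall>c. \<rho> (op_smult c A) = c * \<rho> A)
   \<and> (\<exists>A\<in>Tplus r s. \<rho> A \<noteq> 0)"

definition MG :: "('e \<Rightarrow> 'v) \<Rightarrow> ('e \<Rightarrow> 'v) \<Rightarrow> 'v \<Rightarrow> (('v, 'e) oper \<Rightarrow> complex) set" where
  "MG r s x = {\<rho>. character r s \<rho> \<and> \<rho> (Pop r s x) = 1}"

text \<open>A two-dimensional nest representation, written in the orthonormal basis (h1, h2)
  with h2 spanning N: the matrix entry M \$ i \$ j is <pi(A) h_j, h_i>. Invariance of
  N = span h2 means entry (1,2) vanishes; pi is onto all such operators.\<close>

definition nest_rep :: "('e \<Rightarrow> 'v) \<Rightarrow> ('e \<Rightarrow> 'v) \<Rightarrow> (('v, 'e) oper \<Rightarrow> complex^2^2) \<Rightarrow> bool" where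
  "nest_rep r s \<pi> \<longleftrightarrow>
     (\<forall>A\<in>Tplus r s. \<forall>B\<in>Tplus r s. \<pi> (op_add A B) = \<pi> A + \<pi> B \<and> \<pi> (A \<circ> B) = \<pi> A ** \<pi> B)
   \<and> (\<forall>A\<in>Tplus r s. \<forall>c. \<pi> (op_smult c A) = (\<chi> i j. c * (\<pi> A $ i $ j)))
   \<and> (\<forall>A\<in>Tplus r s. \<forall>\<epsilon>>0. \<exists>\<delta>>0. \<forall>B\<in>Tplus r s.
        opnorm r s (op_diff B A) < \<delta> \<longrightarrow> norm (\<pi> B - \<pi> A) < \<epsilon>)
   \<and> \<pi> ` Tplus r s = {M. M $ 1 $ 2 = 0}"

definition rep_xy :: "('e \<Rightarrow> 'v) \<Rightarrow> ('e \<Rightarrow> 'v) \<Rightarrow> 'v \<Rightarrow> 'v \<Rightarrow> (('v, 'e) oper \<Rightarrow> complex^2^2) set" where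
  "rep_xy r s x y = {\<pi>. nest_rep r s \<pi> \<and> (\<lambda>A. \<pi> A $ 1 $ 1) \<in> MG r s x \<and> (\<lambda>A. \<pi> A $ 2 $ 2) \<in> MG r s y}"

definition Kxy :: "('e \<Rightarrow> 'v) \<Rightarrow> ('e \<Rightarrow> 'v) \<Rightarrow> 'v \<Rightarrow> 'v \<Rightarrow> ('v, 'e) oper set" where
  "Kxy r s x y = {A \<in> Tplus r s. \<forall>\<pi>\<in>rep_xy r s x y. \<pi> A = 0}"

end

theory Submission
  imports Defs
begin

lemma sum_cmp:
  fixes f g :: "'a \<Rightarrow> real"
  assumes "g summable_on A" "\<And>x. x\<in>A \<Longrightarrow> 0 \<le> f x \<and> f x \<le> g x"
  shows "f summable_on A"
proof (rule nonneg_bdd_above_summable_on)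
  show "bdd_above (sum f ` {F. F \<subseteq> A \<and> finite F})"
  proof (rule bdd_aboveI2)
    fix F assume F: "F \<in> {F. F \<subseteq> A \<and> finite F}"
    have "sum f F \<le> sum g F"
      using assms F by (intro sum_mono) auto
    also have "\<dots> = infsum g F"
      using F by simp
    also have "\<dots> \<le> infsum g A"
      apply (rule infsum_mono2)
      using F assms by (auto intro: summable_on_subset_banach) (smt (verit))
    finally show "sum f F \<le> infsum g A" .
  qed
qed (use assms in auto)

lemma ell2_zero[simp]: "(\<lambda>_. 0) \<in> ell2 r s"
  by (simp add: ell2_def)

lemma xi_ell2: "is_path r s w \<Longrightarrow> xi w \<in> ell2 r s"
proof -
  assume p: "is_path r s w"
  have "(\<lambda>u. (cmod (xi w u))\<^sup>2) summable_on UNIV"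
    by (rule summable_on_cong_neutral[where S="{w}" and f="\<lambda>u. (cmod (xi w u))\<^sup>2", THEN iffD1])
       (auto simp: xi_def)
  then show ?thesis using p by (auto simp: ell2_def xi_def)
qed

lemma l2norm_xi[simp]: "l2norm (xi w) = 1"
proof -
  have "infsum (\<lambda>u. (cmod (xi w u))\<^sup>2) UNIV = infsum (\<lambda>u. (cmod (xi w u))\<^sup>2) {w}"
    by (rule infsum_cong_neutral) (auto simp: xi_def)
  then show ?thesis by (simp add: l2norm_def xi_def)
qed

lemma l2norm_zero[simp]: "l2norm (\<lambda>_. 0) = 0"
  by (simp add: l2norm_def)

lemma l2norm_nonneg: "l2norm f \<ge> 0"
  unfolding l2norm_def by (simp add: infsum_nonneg)

lemma point_le_l2norm:
  assumes "f \<in> ell2 r s" shows "cmod (f w) \<le> l2norm f"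
proof -
  have sm: "(\<lambda>w. (cmod (f w))\<^sup>2) summable_on UNIV" using assms by (simp add: ell2_def)
  have "infsum (\<lambda>w. (cmod (f w))\<^sup>2) {w} \<le> infsum (\<lambda>w. (cmod (f w))\<^sup>2) UNIV"
    by (rule infsum_mono2) (use sm in auto)
  then have "(cmod (f w))\<^sup>2 \<le> infsum (\<lambda>w. (cmod (f w))\<^sup>2) UNIV" by simp
  then show ?thesis unfolding l2norm_def by (simp add: real_le_rsqrt)
qed

lemma ell2_scale:
  assumes "f \<in> ell2 r s" shows "(\<lambda>w. c * f w) \<in> ell2 r s"
    and "l2norm (\<lambda>w. c * f w) = cmod c * l2norm f"
proof -
  have sm: "(\<lambda>w. (cmod (f w))\<^sup>2) summable_on UNIV" using assms by (simp add: ell2_def)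
  have eq: "(\<lambda>w. (cmod (c * f w))\<^sup>2) = (\<lambda>w. (cmod c)\<^sup>2 * (cmod (f w))\<^sup>2)"
    by (simp add: norm_mult power_mult_distrib)
  show "(\<lambda>w. c * f w) \<in> ell2 r s" using assms sm
    by (auto simp: ell2_def eq intro: summable_on_cmult_right)
  show "l2norm (\<lambda>w. c * f w) = cmod c * l2norm f"
    unfolding l2norm_def eq infsum_cmult_right[OF sm]
    by (simp add: real_sqrt_mult)
qed

lemma ell2_add:
  assumes "f \<in> ell2 r s" "g \<in> ell2 r s"
  shows "(\<lambda>w. f w + g w) \<in> ell2 r s"
    and "l2norm (\<lambda>w. f w + g w) \<le> 2 * (l2norm f + l2norm g)"
proof -
  have sf: "(\<lambda>w. (cmod (f w))\<^sup>2) summable_on UNIV" using assms by (simp add: ell2_def)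
  have sg: "(\<lambda>w. (cmod (g w))\<^sup>2) summable_on UNIV" using assms by (simp add: ell2_def)
  have pw: "(cmod (f w + g w))\<^sup>2 \<le> 2 * (cmod (f w))\<^sup>2 + 2 * (cmod (g w))\<^sup>2" for w
  proof -
    have "cmod (f w + g w) \<le> cmod (f w) + cmod (g w)" by (rule norm_triangle_ineq)
    then have "(cmod (f w + g w))\<^sup>2 \<le> (cmod (f w) + cmod (g w))\<^sup>2"
      by (simp add: power_mono)
    also have "\<dots> \<le> 2 * (cmod (f w))\<^sup>2 + 2 * (cmod (g w))\<^sup>2"
      by (smt (verit) sum_squares_bound power2_sum)
    finally show ?thesis .
  qed
  have s2: "(\<lambda>w. 2 * (cmod (f w))\<^sup>2 + 2 * (cmod (g w))\<^sup>2) summable_on UNIV"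
    by (intro summable_on_add summable_on_cmult_right sf sg)
  have s3: "(\<lambda>w. (cmod (f w + g w))\<^sup>2) summable_on UNIV"
    by (rule sum_cmp[OF s2]) (use pw in auto)
  show "(\<lambda>w. f w + g w) \<in> ell2 r s" using assms s3 by (auto simp: ell2_def)
  have "infsum (\<lambda>w. (cmod (f w + g w))\<^sup>2) UNIV \<le> infsum (\<lambda>w. 2 * (cmod (f w))\<^sup>2 + 2 * (cmod (g w))\<^sup>2) UNIV"
    by (rule infsum_mono[OF s3 s2]) (use pw in auto)
  also have "\<dots> = 2 * infsum (\<lambda>w. (cmod (f w))\<^sup>2) UNIV + 2 * infsum (\<lambda>w. (cmod (g w))\<^sup>2) UNIV"
    by (simp add: infsum_add summable_on_cmult_right sf sg infsum_cmult_right)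
  finally have le: "infsum (\<lambda>w. (cmod (f w + g w))\<^sup>2) UNIV \<le> 2 * (l2norm f)\<^sup>2 + 2 * (l2norm g)\<^sup>2"
    by (simp add: l2norm_def infsum_nonneg)
  have "l2norm (\<lambda>w. f w + g w) \<le> sqrt (2 * (l2norm f)\<^sup>2 + 2 * (l2norm g)\<^sup>2)"
    unfolding l2norm_def[of "\<lambda>w. f w + g w"] using le by simp
  also have "\<dots> \<le> 2 * (l2norm f + l2norm g)"
  proof (rule real_le_lsqrt)
    show "0 \<le> 2 * (l2norm f + l2norm g)" using l2norm_nonneg[of f] l2norm_nonneg[of g] by simp
    show "2 * (l2norm f)\<^sup>2 + 2 * (l2norm g)\<^sup>2 \<le> (2 * (l2norm f + l2norm g))\<^sup>2"
      using l2norm_nonneg[of f] l2norm_nonneg[of g] by (simp add: power2_eq_square algebra_simps)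
  qed
  finally show "l2norm (\<lambda>w. f w + g w) \<le> 2 * (l2norm f + l2norm g)" .
qed

definition WL :: "('e \<Rightarrow> 'v) \<Rightarrow> ('e \<Rightarrow> 'v) \<Rightarrow> 'e \<Rightarrow> ('v, 'e) fsg set" where
  "WL r s e = {Pth (e # u) | u. u = [] \<or> s e = r (hd u)}"

definition phiL :: "('e \<Rightarrow> 'v) \<Rightarrow> 'e \<Rightarrow> ('v, 'e) fsg \<Rightarrow> ('v, 'e) fsg" where
  "phiL s e w = (case w of Pth (_ # u) \<Rightarrow> if u = [] then Vtx (s e) else Pth u | _ \<Rightarrow> Vtx (s e))"

lemma Lop_eq:
  assumes "f \<in> ell2 r s"
  shows "Lop r s e f = (\<lambda>w. if w \<in> WL r s e then f (phiL s e w) else 0)"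
proof
  fix w show "Lop r s e f w = (if w \<in> WL r s e then f (phiL s e w) else 0)"
    using assms by (auto simp: Lop_def WL_def phiL_def split: fsg.splits list.splits)
qed

lemma inj_phiL: "inj_on (phiL s e) (WL r s e)"
  by (auto simp: inj_on_def WL_def phiL_def split: if_splits)

lemma composable_Cons:
  assumes "composable r s u" "u \<noteq> []" "s e = r (hd u)"
  shows "composable r s (e # u)"
  unfolding composable_def
proof (intro allI impI)
  fix i assume "Suc i < length (e # u)"
  then show "s ((e # u) ! i) = r ((e # u) ! Suc i)"
    using assms by (cases i) (auto simp: composable_def hd_conv_nth)
qed

lemma Lop_ell2:
  assumes f: "f \<in> ell2 r s"
  shows "Lop r s e f \<in> ell2 r s" and "l2norm (Lop r s e f) \<le> l2norm f"
proof -
  have sm: "(\<lambda>w. (cmod (f w))\<^sup>2) summable_on UNIV" using f by (simp add: ell2_def)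
  have sup: "\<And>w. \<not> is_path r s w \<Longrightarrow> f w = 0" using f by (simp add: ell2_def)
  let ?W = "WL r s e" and ?p = "phiL s e"
  let ?h = "\<lambda>w. (cmod (Lop r s e f w))\<^sup>2"
  have h: "?h = (\<lambda>w. if w \<in> ?W then (cmod (f (?p w)))\<^sup>2 else 0)"
    by (simp add: Lop_eq[OF f] fun_eq_iff)
  have s1: "(\<lambda>w. (cmod (f w))\<^sup>2) summable_on (?p ` ?W)"
    by (rule summable_on_subset_banach[OF sm]) simp
  have s2: "((\<lambda>w. (cmod (f w))\<^sup>2) \<circ> ?p) summable_on ?W"
    by (subst summable_on_reindex[OF inj_phiL, symmetric]) (rule s1)
  have s3: "?h summable_on UNIV"
    unfolding h
    by (rule summable_on_cong_neutral[where S="?W" and f="(\<lambda>w. (cmod (f w))\<^sup>2) \<circ> ?p", THEN iffD1])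
       (use s2 in \<open>simp_all\<close>)
  have path: "is_path r s w" if "Lop r s e f w \<noteq> 0" for w
  proof -
    from that have w: "w \<in> ?W" and nz: "f (?p w) \<noteq> 0" by (auto simp: Lop_eq[OF f] split: if_splits)
    then obtain u where u: "w = Pth (e # u)" "u = [] \<or> s e = r (hd u)" by (auto simp: WL_def)
    show ?thesis
    proof (cases "u = []")
      case True then show ?thesis using u by (simp add: is_path_def composable_def)
    next
      case False
      then have "?p w = Pth u" using u by (simp add: phiL_def)
      then have "is_path r s (Pth u)" using nz sup by metis
      then have "composable r s u" by (simp add: is_path_def)
      then have "composable r s (e # u)" using False u by (intro composable_Cons) auto
      then show ?thesis using u by (simp add: is_path_def)
    qed
  qed
  show "Lop r s e f \<in> ell2 r s" using s3 path by (auto simp: ell2_def)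
  have "infsum ?h UNIV = infsum ?h ?W"
    by (rule infsum_cong_neutral) (auto simp: Lop_eq[OF f])
  also have "\<dots> = infsum ((\<lambda>w. (cmod (f w))\<^sup>2) \<circ> ?p) ?W"
    by (rule infsum_cong) (auto simp: Lop_eq[OF f])
  also have "\<dots> = infsum (\<lambda>w. (cmod (f w))\<^sup>2) (?p ` ?W)"
    by (rule infsum_reindex[OF inj_phiL, symmetric])
  also have "\<dots> \<le> infsum (\<lambda>w. (cmod (f w))\<^sup>2) UNIV"
    by (rule infsum_mono2[OF s1 sm]) auto
  finally show "l2norm (Lop r s e f) \<le> l2norm f" unfolding l2norm_def by simp
qed

lemma Pop_ell2:
  assumes f: "f \<in> ell2 r s"
  shows "Pop r s v f \<in> ell2 r s" and "l2norm (Pop r s v f) \<le> l2norm f"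
proof -
  have sm: "(\<lambda>w. (cmod (f w))\<^sup>2) summable_on UNIV" using f by (simp add: ell2_def)
  let ?h = "\<lambda>w. (cmod (Pop r s v f w))\<^sup>2"
  have le: "0 \<le> ?h w \<and> ?h w \<le> (cmod (f w))\<^sup>2" for w using f by (auto simp: Pop_def)
  have s3: "?h summable_on UNIV" by (rule sum_cmp[OF sm]) (use le in auto)
  show "Pop r s v f \<in> ell2 r s" using s3 f by (auto simp: ell2_def Pop_def)
  have "infsum ?h UNIV \<le> infsum (\<lambda>w. (cmod (f w))\<^sup>2) UNIV"
    by (rule infsum_mono[OF s3 sm]) (use le in auto)
  then show "l2norm (Pop r s v f) \<le> l2norm f" unfolding l2norm_def by simp
qed

lemma lin_ell2:
  assumes "f \<in> ell2 r s" "g \<in> ell2 r s"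
  shows "(\<lambda>w. a * f w + b * g w) \<in> ell2 r s"
  using ell2_add(1)[OF ell2_scale(1)[OF assms(1)] ell2_scale(1)[OF assms(2)]] .

lemma bounded_op_Lop: "bounded_op r s (Lop r s e)"
  unfolding bounded_op_def
proof (intro conjI ballI allI impI)
  fix f g and a b :: complex
  assume f: "f \<in> ell2 r s" and g: "g \<in> ell2 r s"
  show "Lop r s e (\<lambda>w. a * f w + b * g w) = (\<lambda>w. a * Lop r s e f w + b * Lop r s e g w)"
    by (simp add: Lop_eq f g lin_ell2[OF f g] fun_eq_iff)
next
  show "\<exists>C. \<forall>f\<in>ell2 r s. l2norm (Lop r s e f) \<le> C * l2norm f"
    by (rule exI[of _ 1]) (simp add: Lop_ell2)
next
  fix f assume "f \<in> ell2 r s" then show "Lop r s e f \<in> ell2 r s" by (rule Lop_ell2)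
next
  fix f assume "f \<notin> ell2 r s" then show "Lop r s e f = (\<lambda>_. 0)" by (simp add: Lop_def)
qed

lemma bounded_op_Pop: "bounded_op r s (Pop r s v)"
  unfolding bounded_op_def
proof (intro conjI ballI allI impI)
  fix f g and a b :: complex
  assume f: "f \<in> ell2 r s" and g: "g \<in> ell2 r s"
  show "Pop r s v (\<lambda>w. a * f w + b * g w) = (\<lambda>w. a * Pop r s v f w + b * Pop r s v g w)"
    by (simp add: Pop_def f g lin_ell2[OF f g] fun_eq_iff)
next
  show "\<exists>C. \<forall>f\<in>ell2 r s. l2norm (Pop r s v f) \<le> C * l2norm f"
    by (rule exI[of _ 1]) (simp add: Pop_ell2)
next
  fix f assume "f \<in> ell2 r s" then show "Pop r s v f \<in> ell2 r s" by (rule Pop_ell2)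
next
  fix f assume "f \<notin> ell2 r s" then show "Pop r s v f = (\<lambda>_. 0)" by (simp add: Pop_def)
qed

lemma bounded_op_maps: "bounded_op r s A \<Longrightarrow> f \<in> ell2 r s \<Longrightarrow> A f \<in> ell2 r s"
  by (simp add: bounded_op_def)

lemma bounded_op_lin: "bounded_op r s A \<Longrightarrow> f \<in> ell2 r s \<Longrightarrow> g \<in> ell2 r s \<Longrightarrow>
   A (\<lambda>w. a * f w + b * g w) = (\<lambda>w. a * A f w + b * A g w)"
  by (simp add: bounded_op_def)

lemma bounded_op_out: "bounded_op r s A \<Longrightarrow> f \<notin> ell2 r s \<Longrightarrow> A f = (\<lambda>_. 0)"
  by (simp add: bounded_op_def)

lemma bounded_op_bound:
  assumes "bounded_op r s A" shows "\<exists>C\<ge>0. \<forall>f\<in>ell2 r s. l2norm (A f) \<le> C * l2norm f"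
proof -
  obtain C where C: "\<forall>f\<in>ell2 r s. l2norm (A f) \<le> C * l2norm f" using assms by (auto simp: bounded_op_def)
  show ?thesis
  proof (intro exI[of _ "max C 0"] conjI ballI)
    fix f assume "f \<in> ell2 r s"
    then have "l2norm (A f) \<le> C * l2norm f" using C by auto
    also have "\<dots> \<le> max C 0 * l2norm f" by (rule mult_right_mono) (auto simp: l2norm_nonneg)
    finally show "l2norm (A f) \<le> max C 0 * l2norm f" .
  qed simp
qed

lemma bounded_op_zero:
  assumes "bounded_op r s A" shows "A (\<lambda>_. 0) = (\<lambda>_. 0)"
  using bounded_op_lin[OF assms ell2_zero ell2_zero, of 0 0] by simp

lemma bounded_op_add:
  assumes A: "bounded_op r s A" and B: "bounded_op r s B"
  shows "bounded_op r s (op_add A B)"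
  unfolding bounded_op_def
proof (intro conjI ballI allI impI)
  fix f assume f: "f \<in> ell2 r s"
  show "op_add A B f \<in> ell2 r s" unfolding op_add_def
    by (rule ell2_add(1)) (use A B f in \<open>auto intro: bounded_op_maps\<close>)
next
  fix f g and a b :: complex
  assume f: "f \<in> ell2 r s" and g: "g \<in> ell2 r s"
  show "op_add A B (\<lambda>w. a * f w + b * g w) = (\<lambda>w. a * op_add A B f w + b * op_add A B g w)"
    by (simp add: op_add_def bounded_op_lin[OF A f g] bounded_op_lin[OF B f g] algebra_simps)
next
  obtain CA where CA: "\<forall>f\<in>ell2 r s. l2norm (A f) \<le> CA * l2norm f" using bounded_op_bound[OF A] by auto
  obtain CB where CB: "\<forall>f\<in>ell2 r s. l2norm (B f) \<le> CB * l2norm f" using bounded_op_bound[OF B] by auto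
  show "\<exists>C. \<forall>f\<in>ell2 r s. l2norm (op_add A B f) \<le> C * l2norm f"
  proof (intro exI[of _ "2 * (CA + CB)"] ballI)
    fix f assume f: "f \<in> ell2 r s"
    have "l2norm (op_add A B f) \<le> 2 * (l2norm (A f) + l2norm (B f))"
      unfolding op_add_def by (rule ell2_add(2)) (use A B f in \<open>auto intro: bounded_op_maps\<close>)
    also have "\<dots> \<le> 2 * (CA * l2norm f + CB * l2norm f)"
    proof -
      have "l2norm (A f) \<le> CA * l2norm f" "l2norm (B f) \<le> CB * l2norm f" using CA CB f by auto
      then show ?thesis by (intro mult_left_mono add_mono) auto
    qed
    finally show "l2norm (op_add A B f) \<le> 2 * (CA + CB) * l2norm f" by (simp add: algebra_simps)
  qed
next
  fix f assume "f \<notin> ell2 r s"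
  then show "op_add A B f = (\<lambda>_. 0)" using A B by (simp add: op_add_def bounded_op_out)
qed

lemma bounded_op_smult:
  assumes A: "bounded_op r s A"
  shows "bounded_op r s (op_smult c A)"
  unfolding bounded_op_def
proof (intro conjI ballI allI impI)
  fix f assume f: "f \<in> ell2 r s"
  show "op_smult c A f \<in> ell2 r s" unfolding op_smult_def
    by (rule ell2_scale(1)) (use A f in \<open>auto intro: bounded_op_maps\<close>)
next
  fix f g and a b :: complex
  assume f: "f \<in> ell2 r s" and g: "g \<in> ell2 r s"
  show "op_smult c A (\<lambda>w. a * f w + b * g w) = (\<lambda>w. a * op_smult c A f w + b * op_smult c A g w)"
    by (simp add: op_smult_def bounded_op_lin[OF A f g] algebra_simps)
next
  obtain CA where CA: "CA \<ge> 0" "\<forall>f\<in>ell2 r s. l2norm (A f) \<le> CA * l2norm f" using bounded_op_bound[OF A] by auto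
  show "\<exists>C. \<forall>f\<in>ell2 r s. l2norm (op_smult c A f) \<le> C * l2norm f"
  proof (intro exI[of _ "cmod c * CA"] ballI)
    fix f assume f: "f \<in> ell2 r s"
    have "l2norm (op_smult c A f) = cmod c * l2norm (A f)"
      unfolding op_smult_def by (rule ell2_scale(2)) (use A f in \<open>auto intro: bounded_op_maps\<close>)
    also have "\<dots> \<le> cmod c * (CA * l2norm f)" using CA f by (simp add: mult_left_mono)
    finally show "l2norm (op_smult c A f) \<le> cmod c * CA * l2norm f" by (simp add: algebra_simps)
  qed
next
  fix f assume "f \<notin> ell2 r s"
  then show "op_smult c A f = (\<lambda>_. 0)" using A by (simp add: op_smult_def bounded_op_out)
qed

lemma bounded_op_comp:
  assumes A: "bounded_op r s A" and B: "bounded_op r s B"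
  shows "bounded_op r s (A \<circ> B)"
  unfolding bounded_op_def
proof (intro conjI ballI allI impI)
  fix f assume f: "f \<in> ell2 r s"
  show "(A \<circ> B) f \<in> ell2 r s" using A B f by (auto intro: bounded_op_maps)
next
  fix f g and a b :: complex
  assume f: "f \<in> ell2 r s" and g: "g \<in> ell2 r s"
  show "(A \<circ> B) (\<lambda>w. a * f w + b * g w) = (\<lambda>w. a * (A \<circ> B) f w + b * (A \<circ> B) g w)"
    using bounded_op_lin[OF A bounded_op_maps[OF B f] bounded_op_maps[OF B g]]
    by (simp add: bounded_op_lin[OF B f g])
next
  obtain CA where CA: "CA \<ge> 0" "\<forall>f\<in>ell2 r s. l2norm (A f) \<le> CA * l2norm f" using bounded_op_bound[OF A] by auto
  obtain CB where CB: "CB \<ge> 0" "\<forall>f\<in>ell2 r s. l2norm (B f) \<le> CB * l2norm f" using bounded_op_bound[OF B] by auto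
  show "\<exists>C. \<forall>f\<in>ell2 r s. l2norm ((A \<circ> B) f) \<le> C * l2norm f"
  proof (intro exI[of _ "CA * CB"] ballI)
    fix f assume f: "f \<in> ell2 r s"
    have "l2norm ((A \<circ> B) f) \<le> CA * l2norm (B f)" using CA bounded_op_maps[OF B f] by auto
    also have "\<dots> \<le> CA * (CB * l2norm f)" using CA CB f by (simp add: mult_left_mono)
    finally show "l2norm ((A \<circ> B) f) \<le> CA * CB * l2norm f" by (simp add: algebra_simps)
  qed
next
  fix f assume "f \<notin> ell2 r s"
  then show "(A \<circ> B) f = (\<lambda>_. 0)" using A B by (simp add: bounded_op_out bounded_op_zero)
qed

lemma op_diff_eq: "op_diff A B = op_add A (op_smult (-1) B)"
  by (simp add: op_diff_def op_add_def op_smult_def fun_eq_iff)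

lemma bounded_op_diff:
  "bounded_op r s A \<Longrightarrow> bounded_op r s B \<Longrightarrow> bounded_op r s (op_diff A B)"
  unfolding op_diff_eq by (intro bounded_op_add bounded_op_smult)

lemma alg_gen_bounded: "S \<in> alg_gen r s \<Longrightarrow> bounded_op r s S"
  by (induction rule: alg_gen.induct)
     (simp_all add: bounded_op_Lop bounded_op_Pop bounded_op_add bounded_op_smult bounded_op_comp[unfolded comp_def])


lemma opnorm_le:
  assumes U: "bounded_op r s U" and f: "f \<in> ell2 r s" and n: "l2norm f \<le> 1"
  shows "l2norm (U f) \<le> opnorm r s U"
  unfolding opnorm_def
proof (rule cSup_upper)
  show "l2norm (U f) \<in> {l2norm (U f) |f. f \<in> ell2 r s \<and> l2norm f \<le> 1}" using f n by blast
  obtain C where C: "C \<ge> 0" "\<forall>f\<in>ell2 r s. l2norm (U f) \<le> C * l2norm f" using bounded_op_bound[OF U] by auto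
  show "bdd_above {l2norm (U f) |f. f \<in> ell2 r s \<and> l2norm f \<le> 1}"
  proof (rule bdd_aboveI[of _ C], clarify)
    fix g assume g: "g \<in> ell2 r s" "l2norm g \<le> 1"
    have "l2norm (U g) \<le> C * l2norm g" using C g by auto
    also have "\<dots> \<le> C * 1" using C g by (intro mult_left_mono) auto
    finally show "l2norm (U g) \<le> C" by simp
  qed
qed

lemma opnorm_nonneg: "bounded_op r s U \<Longrightarrow> 0 \<le> opnorm r s U"
  using opnorm_le[of r s U "\<lambda>_. 0"] by (simp add: bounded_op_zero)

lemma l2norm_zero_imp: "f \<in> ell2 r s \<Longrightarrow> l2norm f = 0 \<Longrightarrow> f = (\<lambda>_. 0)"
  using point_le_l2norm[of f r s] by (auto simp: fun_eq_iff)

lemma opnorm_bound: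
  assumes U: "bounded_op r s U" and f: "f \<in> ell2 r s"
  shows "l2norm (U f) \<le> opnorm r s U * l2norm f"
proof (cases "l2norm f = 0")
  case True
  then have "f = (\<lambda>_. 0)" using l2norm_zero_imp f by blast
  then show ?thesis using U by (simp add: bounded_op_zero)
next
  case False
  define n where "n = l2norm f"
  have n: "n > 0" using False l2norm_nonneg[of f] n_def by auto
  define g where "g = (\<lambda>w. complex_of_real (1/n) * f w)"
  have g: "g \<in> ell2 r s" unfolding g_def by (rule ell2_scale(1)[OF f])
  have "l2norm g = cmod (complex_of_real (1/n)) * l2norm f" unfolding g_def by (rule ell2_scale(2)[OF f])
  also have "cmod (complex_of_real (1/n)) = 1/n" using n by (simp only: norm_of_real) simp
  finally have gn: "l2norm g = 1" using n n_def by simp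
  have Ug: "U g = (\<lambda>w. complex_of_real (1/n) * U f w)"
    using bounded_op_lin[OF U f f, of "complex_of_real (1/n)" 0] by (simp add: g_def)
  have "l2norm (U g) = (1/n) * l2norm (U f)"
    unfolding Ug ell2_scale(2)[OF bounded_op_maps[OF U f]] \<open>cmod (complex_of_real (1/n)) = 1/n\<close> ..
  moreover have "l2norm (U g) \<le> opnorm r s U" using opnorm_le[OF U g] gn by simp
  ultimately have "l2norm (U f) / n \<le> opnorm r s U" by simp
  then show ?thesis using n n_def by (simp add: pos_divide_le_eq)
qed

lemma opnorm_point:
  assumes U: "bounded_op r s U" and f: "f \<in> ell2 r s"
  shows "cmod (U f w) \<le> opnorm r s U * l2norm f"
  using point_le_l2norm[OF bounded_op_maps[OF U f], of w] opnorm_bound[OF U f] by linarith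

lemma opnorm_zero: "opnorm r s (\<lambda>f w. 0) = 0"
proof -
  have "{l2norm ((\<lambda>f w. 0) f) | f. f \<in> ell2 r s \<and> l2norm f \<le> 1} = {0::real}"
    by (auto intro!: exI[of _ "\<lambda>_. 0"])
  then show ?thesis unfolding opnorm_def by simp
qed

lemma alg_gen_Tplus: "S \<in> alg_gen r s \<Longrightarrow> S \<in> Tplus r s"
  unfolding Tplus_def
proof (intro CollectI conjI allI impI)
  assume S: "S \<in> alg_gen r s"
  show "bounded_op r s S" using S by (rule alg_gen_bounded)
  fix \<epsilon> :: real assume "\<epsilon> > 0"
  moreover have "op_diff S S = (\<lambda>f w. 0)" by (simp add: op_diff_def fun_eq_iff)
  ultimately show "\<exists>S'\<in>alg_gen r s. opnorm r s (op_diff S S') < \<epsilon>"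
    using S by (intro bexI[of _ S]) (simp_all add: opnorm_zero)
qed

lemma small_zero:
  fixes z :: complex
  assumes "\<And>\<epsilon>. \<epsilon> > 0 \<Longrightarrow> cmod z \<le> \<epsilon> * K"
  shows "z = 0"
proof (rule ccontr)
  assume "z \<noteq> 0"
  then have z: "cmod z > 0" by simp
  define \<epsilon> where "\<epsilon> = cmod z / (2 * (\<bar>K\<bar> + 1))"
  have e: "\<epsilon> > 0" using z by (simp add: \<epsilon>_def add_pos_nonneg)
  have "\<epsilon> * K \<le> \<epsilon> * (\<bar>K\<bar> + 1)" using e by (intro mult_left_mono) auto
  also have "\<dots> = cmod z / 2" unfolding \<epsilon>_def by (simp add: field_simps add_pos_nonneg)
  finally show False using assms[OF e] z by linarith
qed

lemma is_path_single[simp]: "is_path r s (Pth [e])"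
  by (simp add: is_path_def composable_def)

lemma is_path_Vtx[simp]: "is_path r s (Vtx v)"
  by (simp add: is_path_def)

definition QP :: "('e \<Rightarrow> 'v) \<Rightarrow> ('e \<Rightarrow> 'v) \<Rightarrow> 'v \<Rightarrow> 'v \<Rightarrow> 'e \<Rightarrow> ('v, 'e) oper \<Rightarrow> bool" where
  "QP r s x y e T \<longleftrightarrow> (\<exists>a b c. \<forall>f\<in>ell2 r s. T f (Vtx x) = a * f (Vtx x) \<and> T f (Vtx y) = c * f (Vtx y)
      \<and> T f (Pth [e]) = b * f (Vtx x) + c * f (Pth [e]))"

lemma alg_gen_QP:
  assumes "S \<in> alg_gen r s" "s e = x" "r e = y"
  shows "QP r s x y e S"
  using assms(1)
proof (induction rule: alg_gen.induct)
  case (gen_L e')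
  show ?case unfolding QP_def
    by (rule exI[of _ 0], rule exI[of _ "if e = e' then 1 else 0"], rule exI[of _ 0])
       (use assms in \<open>auto simp: Lop_def\<close>)
next
  case (gen_P v)
  show ?case unfolding QP_def
    by (rule exI[of _ "if x = v then 1 else 0"], rule exI[of _ 0], rule exI[of _ "if y = v then 1 else 0"])
       (use assms in \<open>auto simp: Pop_def\<close>)
next
  case (gen_add A B)
  from gen_add.IH obtain a1 b1 c1 a2 b2 c2 where
    1: "\<forall>f\<in>ell2 r s. A f (Vtx x) = a1 * f (Vtx x) \<and> A f (Vtx y) = c1 * f (Vtx y)
      \<and> A f (Pth [e]) = b1 * f (Vtx x) + c1 * f (Pth [e])" and
    2: "\<forall>f\<in>ell2 r s. B f (Vtx x) = a2 * f (Vtx x) \<and> B f (Vtx y) = c2 * f (Vtx y)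
      \<and> B f (Pth [e]) = b2 * f (Vtx x) + c2 * f (Pth [e])"
    unfolding QP_def by blast
  show ?case unfolding QP_def
    by (rule exI[of _ "a1 + a2"], rule exI[of _ "b1 + b2"], rule exI[of _ "c1 + c2"])
       (use 1 2 in \<open>auto simp: op_add_def algebra_simps\<close>)
next
  case (gen_smult A k)
  from gen_smult.IH obtain a1 b1 c1 where
    1: "\<forall>f\<in>ell2 r s. A f (Vtx x) = a1 * f (Vtx x) \<and> A f (Vtx y) = c1 * f (Vtx y)
      \<and> A f (Pth [e]) = b1 * f (Vtx x) + c1 * f (Pth [e])"
    unfolding QP_def by blast
  show ?case unfolding QP_def
    by (rule exI[of _ "k * a1"], rule exI[of _ "k * b1"], rule exI[of _ "k * c1"])
       (use 1 in \<open>auto simp: op_smult_def algebra_simps\<close>)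
next
  case (gen_mult A B)
  from gen_mult.IH obtain a1 b1 c1 a2 b2 c2 where
    1: "\<forall>f\<in>ell2 r s. A f (Vtx x) = a1 * f (Vtx x) \<and> A f (Vtx y) = c1 * f (Vtx y)
      \<and> A f (Pth [e]) = b1 * f (Vtx x) + c1 * f (Pth [e])" and
    2: "\<forall>f\<in>ell2 r s. B f (Vtx x) = a2 * f (Vtx x) \<and> B f (Vtx y) = c2 * f (Vtx y)
      \<and> B f (Pth [e]) = b2 * f (Vtx x) + c2 * f (Pth [e])"
    unfolding QP_def by blast
  have Bb: "bounded_op r s B" using gen_mult.hyps(2) by (rule alg_gen_bounded)
  show ?case unfolding QP_def
  proof (rule exI[of _ "a1 * a2"], rule exI[of _ "b1 * a2 + c1 * b2"], rule exI[of _ "c1 * c2"], intro ballI)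
    fix f assume f: "f \<in> ell2 r s"
    have Bf: "B f \<in> ell2 r s" using bounded_op_maps[OF Bb f] .
    show "(A \<circ> B) f (Vtx x) = a1 * a2 * f (Vtx x) \<and> (A \<circ> B) f (Vtx y) = c1 * c2 * f (Vtx y) \<and>
          (A \<circ> B) f (Pth [e]) = (b1 * a2 + c1 * b2) * f (Vtx x) + c1 * c2 * f (Pth [e])"
      using 1[rule_format, OF Bf] 2[rule_format, OF f] by (simp add: algebra_simps)
  qed
qed


lemma Tplus_Q:
  assumes T: "T \<in> Tplus r s" and se: "s e = x" and re: "r e = y" and xy: "x \<noteq> y"
    and f: "f \<in> ell2 r s"
  shows "T f (Vtx x) = T (xi (Vtx x)) (Vtx x) * f (Vtx x)"
    and "T f (Vtx y) = T (xi (Vtx y)) (Vtx y) * f (Vtx y)"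
    and "T f (Pth [e]) = T (xi (Vtx x)) (Pth [e]) * f (Vtx x) + T (xi (Vtx y)) (Vtx y) * f (Pth [e])"
proof -
  have Tb: "bounded_op r s T" using T by (simp add: Tplus_def)
  let ?X = "xi (Vtx x)" and ?Y = "xi (Vtx y)"
  have X: "?X \<in> ell2 r s" and Y: "?Y \<in> ell2 r s" by (simp_all add: xi_ell2)
  have xv: "?X (Vtx x) = 1" "?X (Vtx y) = 0" "?X (Pth [e]) = 0" "?Y (Vtx y) = 1" "?Y (Vtx x) = 0" "?Y (Pth [e]) = 0"
    using xy by (auto simp: xi_def)
  let ?K = "l2norm f + cmod (f (Vtx x)) + cmod (f (Vtx y)) + cmod (f (Pth [e]))"
  have key: "cmod (T f (Vtx x) - T ?X (Vtx x) * f (Vtx x)) \<le> \<epsilon> * ?K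
     \<and> cmod (T f (Vtx y) - T ?Y (Vtx y) * f (Vtx y)) \<le> \<epsilon> * ?K
     \<and> cmod (T f (Pth [e]) - (T ?X (Pth [e]) * f (Vtx x) + T ?Y (Vtx y) * f (Pth [e]))) \<le> \<epsilon> * ?K"
    if e: "\<epsilon> > 0" for \<epsilon>
  proof -
    obtain S where S: "S \<in> alg_gen r s" and SE: "opnorm r s (op_diff T S) < \<epsilon>"
      using T e by (auto simp: Tplus_def)
    define U where "U = op_diff T S"
    have Ub: "bounded_op r s U" unfolding U_def using Tb alg_gen_bounded[OF S] by (rule bounded_op_diff)
    have TSU: "T g w = S g w + U g w" for g w by (simp add: U_def op_diff_def)
    have Ubd: "cmod (U g w) \<le> \<epsilon> * l2norm g" if "g \<in> ell2 r s" for g w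
    proof -
      have "cmod (U g w) \<le> opnorm r s U * l2norm g" by (rule opnorm_point[OF Ub that])
      also have "\<dots> \<le> \<epsilon> * l2norm g" using SE U_def by (intro mult_right_mono) (auto simp: l2norm_nonneg)
      finally show ?thesis .
    qed
    obtain a b c where Q: "\<forall>f\<in>ell2 r s. S f (Vtx x) = a * f (Vtx x) \<and> S f (Vtx y) = c * f (Vtx y)
      \<and> S f (Pth [e]) = b * f (Vtx x) + c * f (Pth [e])"
      using alg_gen_QP[OF S se re] unfolding QP_def by blast
    have QX: "S ?X (Vtx x) = a" "S ?X (Pth [e]) = b" using Q X xv by auto
    have QY: "S ?Y (Vtx y) = c" using Q Y xv by auto
    have Qf: "S f (Vtx x) = a * f (Vtx x)" "S f (Vtx y) = c * f (Vtx y)"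
      "S f (Pth [e]) = b * f (Vtx x) + c * f (Pth [e])" using Q f by auto
    have u1: "cmod (U f w) \<le> \<epsilon> * l2norm f" for w using Ubd[OF f] .
    have u2: "cmod (U ?X w) \<le> \<epsilon>" for w using Ubd[OF X] by simp
    have u3: "cmod (U ?Y w) \<le> \<epsilon>" for w using Ubd[OF Y] by simp
    have p1: "cmod (U ?X w * f v) \<le> \<epsilon> * cmod (f v)" for w v
      unfolding norm_mult by (rule mult_right_mono[OF u2]) simp
    have p2: "cmod (U ?Y w * f v) \<le> \<epsilon> * cmod (f v)" for w v
      unfolding norm_mult by (rule mult_right_mono[OF u3]) simp
    have nn: "0 \<le> \<epsilon> * cmod (f v)" for v using e by simp
    have nn2: "0 \<le> \<epsilon> * l2norm f" using e l2norm_nonneg[of f] by simp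
    have e1: "T f (Vtx x) - T ?X (Vtx x) * f (Vtx x) = U f (Vtx x) - U ?X (Vtx x) * f (Vtx x)"
      by (simp add: TSU Qf QX algebra_simps)
    have e2: "T f (Vtx y) - T ?Y (Vtx y) * f (Vtx y) = U f (Vtx y) - U ?Y (Vtx y) * f (Vtx y)"
      by (simp add: TSU Qf QY algebra_simps)
    have e3: "T f (Pth [e]) - (T ?X (Pth [e]) * f (Vtx x) + T ?Y (Vtx y) * f (Pth [e]))
       = U f (Pth [e]) - U ?X (Pth [e]) * f (Vtx x) - U ?Y (Vtx y) * f (Pth [e])"
      by (simp add: TSU Qf QX QY algebra_simps)
    have d2: "cmod (p - q) \<le> cmod p + cmod q" for p q :: complex by (rule norm_triangle_ineq4)
    have "cmod (U f (Vtx x) - U ?X (Vtx x) * f (Vtx x)) \<le> \<epsilon> * ?K"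
      using d2[of "U f (Vtx x)" "U ?X (Vtx x) * f (Vtx x)"] u1[of "Vtx x"] p1[of "Vtx x" "Vtx x"]
        nn[of "Vtx y"] nn[of "Pth [e]"]
      by (simp add: distrib_left)
    moreover have "cmod (U f (Vtx y) - U ?Y (Vtx y) * f (Vtx y)) \<le> \<epsilon> * ?K"
      using d2[of "U f (Vtx y)" "U ?Y (Vtx y) * f (Vtx y)"] u1[of "Vtx y"] p2[of "Vtx y" "Vtx y"]
        nn[of "Vtx x"] nn[of "Pth [e]"]
      by (simp add: distrib_left)
    moreover have "cmod (U f (Pth [e]) - U ?X (Pth [e]) * f (Vtx x) - U ?Y (Vtx y) * f (Pth [e])) \<le> \<epsilon> * ?K"
      using d2[of "U f (Pth [e]) - U ?X (Pth [e]) * f (Vtx x)" "U ?Y (Vtx y) * f (Pth [e])"]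
        d2[of "U f (Pth [e])" "U ?X (Pth [e]) * f (Vtx x)"]
        u1[of "Pth [e]"] p1[of "Pth [e]" "Vtx x"] p2[of "Vtx y" "Pth [e]"] nn[of "Vtx y"]
      by (simp add: distrib_left)
    ultimately show ?thesis using e1 e2 e3 by simp
  qed
  have "T f (Vtx x) - T ?X (Vtx x) * f (Vtx x) = 0" by (rule small_zero) (use key in blast)
  then show "T f (Vtx x) = T ?X (Vtx x) * f (Vtx x)" by simp
  have "T f (Vtx y) - T ?Y (Vtx y) * f (Vtx y) = 0" by (rule small_zero) (use key in blast)
  then show "T f (Vtx y) = T ?Y (Vtx y) * f (Vtx y)" by simp
  have "T f (Pth [e]) - (T ?X (Pth [e]) * f (Vtx x) + T ?Y (Vtx y) * f (Pth [e])) = 0"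
    by (rule small_zero) (use key in blast)
  then show "T f (Pth [e]) = T ?X (Pth [e]) * f (Vtx x) + T ?Y (Vtx y) * f (Pth [e])" by simp
qed


definition piE :: "('e \<Rightarrow> 'v) \<Rightarrow> ('e \<Rightarrow> 'v) \<Rightarrow> 'v \<Rightarrow> 'v \<Rightarrow> 'e \<Rightarrow> ('v, 'e) oper \<Rightarrow> complex^2^2" where
  "piE r s x y e T = (\<chi> i j. if i = 1 \<and> j = 1 then T (xi (Vtx x)) (Vtx x)
     else if i = 2 \<and> j = 1 then T (xi (Vtx x)) (Pth [e])
     else if i = 2 \<and> j = 2 then T (xi (Vtx y)) (Vtx y) else 0)"

lemma piE_nth:
  "piE r s x y e T $ 1 $ 1 = T (xi (Vtx x)) (Vtx x)"
  "piE r s x y e T $ 1 $ 2 = 0"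
  "piE r s x y e T $ 2 $ 1 = T (xi (Vtx x)) (Pth [e])"
  "piE r s x y e T $ 2 $ 2 = T (xi (Vtx y)) (Vtx y)"
  by (simp_all add: piE_def)

lemma mat2_eq: "(M::complex^2^2) = N \<longleftrightarrow> M$1$1 = N$1$1 \<and> M$1$2 = N$1$2 \<and> M$2$1 = N$2$1 \<and> M$2$2 = N$2$2"
  by (auto simp: vec_eq_iff forall_2)

lemma mult2_nth[simp]:
  "((M::complex^2^2) ** N) $ i $ j = M$i$1 * N$1$j + M$i$2 * N$2$j"
  by (simp add: matrix_matrix_mult_def sum_2)

lemma piE_mult:
  assumes A: "A \<in> Tplus r s" and B: "B \<in> Tplus r s" and se: "s e = x" and re: "r e = y" and xy: "x \<noteq> y"
  shows "piE r s x y e (A \<circ> B) = piE r s x y e A ** piE r s x y e B"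
proof -
  have Bb: "bounded_op r s B" using B by (simp add: Tplus_def)
  have BX: "B (xi (Vtx x)) \<in> ell2 r s" and BY: "B (xi (Vtx y)) \<in> ell2 r s"
    by (simp_all add: bounded_op_maps[OF Bb] xi_ell2)
  note QX = Tplus_Q[OF A se re xy BX] and QY = Tplus_Q[OF A se re xy BY]
  show ?thesis unfolding mat2_eq by (simp add: QX QY piE_nth)
qed

lemma norm_mat_le:
  fixes M :: "complex^2^2"
  shows "norm M \<le> cmod (M$1$1) + cmod (M$1$2) + cmod (M$2$1) + cmod (M$2$2)"
proof -
  have l1: "norm v \<le> sum (\<lambda>i. norm (v$i)) UNIV" for v :: "'a::real_normed_vector^2"
    by (simp add: norm_vec_def L2_set_le_sum)
  have "norm M \<le> norm (M$1) + norm (M$2)" using l1[of M] by (simp add: sum_2)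
  also have "\<dots> \<le> (cmod (M$1$1) + cmod (M$1$2)) + (cmod (M$2$1) + cmod (M$2$2))"
    using l1[of "M$1"] l1[of "M$2"] by (intro add_mono) (simp_all add: sum_2)
  finally show ?thesis by simp
qed

lemma piE_rep:
  assumes se: "s e = x" and re: "r e = y" and xy: "x \<noteq> y"
  shows "piE r s x y e \<in> rep_xy r s x y"
proof -
  let ?p = "piE r s x y e"
  have X: "xi (Vtx x) \<in> ell2 r s" and Y: "xi (Vtx y) \<in> ell2 r s" by (simp_all add: xi_ell2)
  have PxT: "Pop r s x \<in> Tplus r s" and PyT: "Pop r s y \<in> Tplus r s" and LeT: "Lop r s e \<in> Tplus r s"
    by (simp_all add: alg_gen_Tplus alg_gen.intros)
  have Px: "?p (Pop r s x) $ 1 $ 1 = 1" using X by (simp add: Pop_def xi_def piE_nth)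
  have Py: "?p (Pop r s y) $ 2 $ 2 = 1" using Y by (simp add: Pop_def xi_def piE_nth)
  have hom: "\<forall>A\<in>Tplus r s. \<forall>B\<in>Tplus r s. ?p (op_add A B) = ?p A + ?p B \<and> ?p (A \<circ> B) = ?p A ** ?p B"
    using piE_mult[where s=s and e=e and x=x and r=r and y=y, OF _ _ se re xy] by (simp add: mat2_eq op_add_def piE_nth)
  have sm: "\<forall>A\<in>Tplus r s. \<forall>c. ?p (op_smult c A) = (\<chi> i j. c * (?p A $ i $ j))"
    by (simp add: mat2_eq op_smult_def piE_nth)
  have cont: "\<forall>A\<in>Tplus r s. \<forall>\<epsilon>>0. \<exists>\<delta>>0. \<forall>B\<in>Tplus r s.
        opnorm r s (op_diff B A) < \<delta> \<longrightarrow> norm (?p B - ?p A) < \<epsilon>"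
  proof (intro ballI allI impI)
    fix A \<epsilon> assume A: "A \<in> Tplus r s" and e: "(\<epsilon>::real) > 0"
    show "\<exists>\<delta>>0. \<forall>B\<in>Tplus r s. opnorm r s (op_diff B A) < \<delta> \<longrightarrow> norm (?p B - ?p A) < \<epsilon>"
    proof (intro exI[of _ "\<epsilon>/4"] conjI ballI impI)
      show "\<epsilon>/4 > 0" using e by simp
      fix B assume B: "B \<in> Tplus r s" and d: "opnorm r s (op_diff B A) < \<epsilon>/4"
      define U where "U = op_diff B A"
      have Ub: "bounded_op r s U" unfolding U_def
        using B A by (intro bounded_op_diff) (simp_all add: Tplus_def)
      have bd: "cmod (U (xi (Vtx v)) w) \<le> opnorm r s U" for v w
        using opnorm_point[OF Ub xi_ell2[of r s "Vtx v"], of w] by simp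
      have D: "?p B - ?p A = ?p U" by (simp add: mat2_eq U_def op_diff_def piE_nth)
      have "norm (?p U) \<le> cmod (?p U$1$1) + cmod (?p U$1$2) + cmod (?p U$2$1) + cmod (?p U$2$2)"
        by (rule norm_mat_le)
      also have "\<dots> \<le> 4 * opnorm r s U"
        using bd[of x "Vtx x"] bd[of x "Pth [e]"] bd[of y "Vtx y"]
          opnorm_nonneg[OF Ub] by (simp add: piE_nth)
      also have "\<dots> < \<epsilon>" using d U_def by simp
      finally show "norm (?p B - ?p A) < \<epsilon>" using D by simp
    qed
  qed
  have img: "?p ` Tplus r s = {M. M $ 1 $ 2 = 0}"
  proof
    show "?p ` Tplus r s \<subseteq> {M. M $ 1 $ 2 = 0}" by (auto simp: piE_nth)
    show "{M. M $ 1 $ 2 = 0} \<subseteq> ?p ` Tplus r s"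
    proof
      fix M :: "complex^2^2" assume "M \<in> {M. M $ 1 $ 2 = 0}"
      then have M12: "M $ 1 $ 2 = 0" by simp
      define T where "T = op_add (op_smult (M$1$1) (Pop r s x))
          (op_add (op_smult (M$2$1) (Lop r s e)) (op_smult (M$2$2) (Pop r s y)))"
      have "T \<in> alg_gen r s" unfolding T_def by (intro alg_gen.intros)
      then have TT: "T \<in> Tplus r s" by (rule alg_gen_Tplus)
      have "?p T = M" unfolding mat2_eq using X Y xy se M12
        by (simp add: T_def op_add_def op_smult_def Pop_def Lop_def xi_def piE_nth)
      then show "M \<in> ?p ` Tplus r s" using TT by blast
    qed
  qed
  have nr: "nest_rep r s ?p" unfolding nest_rep_def using hom sm cont img by blast
  have c1: "(\<lambda>A. ?p A $ 1 $ 1) \<in> MG r s x"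
    unfolding MG_def character_def using hom sm Px PxT
    by (auto simp: piE_nth(2) intro!: bexI[of _ "Pop r s x"])
  have c2: "(\<lambda>A. ?p A $ 2 $ 2) \<in> MG r s y"
    unfolding MG_def character_def using hom sm Py PyT
    by (auto simp: piE_nth(2) intro!: bexI[of _ "Pop r s y"])
  show ?thesis unfolding rep_xy_def using nr c1 c2 by blast
qed

theorem lemma2p9:
  fixes r s :: "'e::countable \<Rightarrow> 'v::countable"
    and x y :: 'v and es :: "'e list" and A :: "('v, 'e) oper"
  assumes "x \<noteq> y"
    and "distinct es"
    and "\<forall>e\<in>set es. s e = x \<and> r e = y"
    and "A \<in> Kxy r s x y"
    and "A = Pop r s y \<circ> A \<circ> Pop r s x"
  shows "\<forall>e\<in>set es. fcoef r s A (Pth [e]) = 0"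
proof
  fix e assume "e \<in> set es"
  then have se: "s e = x" and re: "r e = y" using assms(3) by auto
  have "piE r s x y e A = 0" using assms(4) piE_rep[where s=s and e=e and x=x and r=r and y=y, OF se re assms(1)] by (auto simp: Kxy_def)
  then have "A (xi (Vtx x)) (Pth [e]) = 0" by (metis piE_nth(3) zero_index)
  moreover have "fcoef r s A (Pth [e]) = A (xi (Vtx x)) (Pth [e])"
  proof -
    have "fcoef r s A (Pth [e]) = infsum (\<lambda>w. A (xi (Vtx x)) w * cnj (xi (Pth [e]) w)) {Pth [e]}"
      unfolding fcoef_def l2inner_def using se
      by (intro infsum_cong_neutral) (auto simp: xi_def)
    then show ?thesis by (simp add: xi_def)
  qed
  ultimately show "fcoef r s A (Pth [e]) = 0" by simp
qed

end
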